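(* Let $(V,\le,\preccurlyeq)$ be a mixed lattice vector space such that $(V,\le)$ is a lattice (a Riesz space). If $\tau$ is a locally symmetric-solid vector topology on $V$, then $\tau$ is a locally solid Riesz space topology on $(V,\le)$.
   Context: A mixed lattice vector space $(V,\le,\preccurlyeq)$ is a real vector space $V$ with two partial orderings $\le$ (initial order) and $\preccurlyeq$ (specific order), each making $V$ a partially ordered vector space, with positive cones $V_p=\{x:0\le x\}$, $V_{sp}=\{x:0\preccurlyeq x\}$, such that: (1) for all $x,y$ the elements $x\curlyvee y=\min\{w: w\succcurlyeq x,\ w\ge y\}$ and $x\curlywedge y=\max\{w: w\preccurlyeq x,\ w\le y\}$ exist (min/max with respect to $\le$); (2) $x\preccurlyeq y$ implies $x\le y$; (3) $x\curlyvee y, x\curlywedge y\in V_{sp}$ whenever $x,y\in V_{sp}$. Notation: $x^u=0\curlyvee x$, $x^l=0\curlyvee(-x)$, $s(x)=x^u+x^l$. A set $A$ is symmetric-solid if $x\in A$ and $s(y)\le s(x)$ imply $y\in A$; a vector topology is locally symmetric-solid if it has a base at zero of symmetric-solid sets. A locally solid Riesz space topology on $(V,\le)$ is a vector topology with a base at zero of sets $S$ such that $y\in S$ and $|x|\le|y|$ imply $x\in S$, where $|\cdot|$ is the lattice absolute value of $(V,\le)$. *)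

theory Defs
  imports "HOL-Analysis.Analysis"
begin

text \<open>Orders are given as explicit relations on a real vector space, since V carries two orders.\<close>

definition is_least :: "('a \<Rightarrow> 'a \<Rightarrow> bool) \<Rightarrow> 'a set \<Rightarrow> 'a \<Rightarrow> bool" where
  "is_least le S m \<longleftrightarrow> m \<in> S \<and> (\<forall>w\<in>S. le m w)"

definition is_greatest :: "('a \<Rightarrow> 'a \<Rightarrow> bool) \<Rightarrow> 'a set \<Rightarrow> 'a \<Rightarrow> bool" where
  "is_greatest le S m \<longleftrightarrow> m \<in> S \<and> (\<forall>w\<in>S. le w m)"

definition ordered_vs :: "('a::real_vector \<Rightarrow> 'a \<Rightarrow> bool) \<Rightarrow> bool" where
  "ordered_vs le \<longleftrightarrow>
     (\<forall>x. le x x) \<and>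
     (\<forall>x y. le x y \<and> le y x \<longrightarrow> x = y) \<and>
     (\<forall>x y z. le x y \<and> le y z \<longrightarrow> le x z) \<and>
     (\<forall>x y z. le x y \<longrightarrow> le (x + z) (y + z)) \<and>
     (\<forall>x y (c::real). le x y \<and> 0 \<le> c \<longrightarrow> le (c *\<^sub>R x) (c *\<^sub>R y))"

definition mixed_upper :: "('a \<Rightarrow> 'a \<Rightarrow> bool) \<Rightarrow> ('a \<Rightarrow> 'a \<Rightarrow> bool) \<Rightarrow> 'a \<Rightarrow> 'a \<Rightarrow> 'a" where
  "mixed_upper le sle x y = (THE m. is_least le {w. sle x w \<and> le y w} m)"

definition mixed_lower :: "('a \<Rightarrow> 'a \<Rightarrow> bool) \<Rightarrow> ('a \<Rightarrow> 'a \<Rightarrow> bool) \<Rightarrow> 'a \<Rightarrow> 'a \<Rightarrow> 'a" where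
  "mixed_lower le sle x y = (THE m. is_greatest le {w. sle w x \<and> le w y} m)"

definition mixed_lattice_vs ::
  "('a::real_vector \<Rightarrow> 'a \<Rightarrow> bool) \<Rightarrow> ('a \<Rightarrow> 'a \<Rightarrow> bool) \<Rightarrow> bool" where
  "mixed_lattice_vs le sle \<longleftrightarrow>
     ordered_vs le \<and> ordered_vs sle \<and>
     (\<forall>x y. \<exists>m. is_least le {w. sle x w \<and> le y w} m) \<and>
     (\<forall>x y. \<exists>m. is_greatest le {w. sle w x \<and> le w y} m) \<and>
     (\<forall>x y. sle x y \<longrightarrow> le x y) \<and>
     (\<forall>x y. sle 0 x \<and> sle 0 y \<longrightarrow>
        sle 0 (mixed_upper le sle x y) \<and> sle 0 (mixed_lower le sle x y))"

definition upart :: "('a::real_vector \<Rightarrow> 'a \<Rightarrow> bool) \<Rightarrow> ('a \<Rightarrow> 'a \<Rightarrow> bool) \<Rightarrow> 'a \<Rightarrow> 'a" where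
  "upart le sle x = mixed_upper le sle 0 x"

definition lpart :: "('a::real_vector \<Rightarrow> 'a \<Rightarrow> bool) \<Rightarrow> ('a \<Rightarrow> 'a \<Rightarrow> bool) \<Rightarrow> 'a \<Rightarrow> 'a" where
  "lpart le sle x = mixed_upper le sle 0 (- x)"

definition sabs :: "('a::real_vector \<Rightarrow> 'a \<Rightarrow> bool) \<Rightarrow> ('a \<Rightarrow> 'a \<Rightarrow> bool) \<Rightarrow> 'a \<Rightarrow> 'a" where
  "sabs le sle x = upart le sle x + lpart le sle x"

definition symmetric_solid :: "('a::real_vector \<Rightarrow> 'a \<Rightarrow> bool) \<Rightarrow> ('a \<Rightarrow> 'a \<Rightarrow> bool) \<Rightarrow> 'a set \<Rightarrow> bool" where
  "symmetric_solid le sle A \<longleftrightarrow>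
     (\<forall>x y. x \<in> A \<and> le (sabs le sle y) (sabs le sle x) \<longrightarrow> y \<in> A)"

text \<open>(V,\<le>) is a lattice: every pair has a least upper bound w.r.t. le
  (greatest lower bounds then exist in an ordered vector space, but we require both).\<close>
definition lattice_ord :: "('a \<Rightarrow> 'a \<Rightarrow> bool) \<Rightarrow> bool" where
  "lattice_ord le \<longleftrightarrow>
     (\<forall>x y. \<exists>m. is_least le {w. le x w \<and> le y w} m) \<and>
     (\<forall>x y. \<exists>m. is_greatest le {w. le w x \<and> le w y} m)"

definition lsup :: "('a \<Rightarrow> 'a \<Rightarrow> bool) \<Rightarrow> 'a \<Rightarrow> 'a \<Rightarrow> 'a" where
  "lsup le x y = (THE m. is_least le {w. le x w \<and> le y w} m)"

definition labs :: "('a::real_vector \<Rightarrow> 'a \<Rightarrow> bool) \<Rightarrow> 'a \<Rightarrow> 'a" where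
  "labs le x = lsup le x (- x)"

definition solid :: "('a::real_vector \<Rightarrow> 'a \<Rightarrow> bool) \<Rightarrow> 'a set \<Rightarrow> bool" where
  "solid le S \<longleftrightarrow> (\<forall>x y. y \<in> S \<and> le (labs le x) (labs le y) \<longrightarrow> x \<in> S)"

definition vector_topology :: "'a::real_vector topology \<Rightarrow> bool" where
  "vector_topology T \<longleftrightarrow>
     topspace T = UNIV \<and>
     continuous_map (prod_topology T T) T (\<lambda>(x, y). x + y) \<and>
     continuous_map (prod_topology euclideanreal T) T (\<lambda>(c, x). c *\<^sub>R x)"

definition nhd0 :: "'a::real_vector topology \<Rightarrow> 'a set \<Rightarrow> bool" where
  "nhd0 T U \<longleftrightarrow> (\<exists>W. openin T W \<and> 0 \<in> W \<and> W \<subseteq> U)"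

definition has_base_at_zero :: "'a::real_vector topology \<Rightarrow> ('a set \<Rightarrow> bool) \<Rightarrow> bool" where
  "has_base_at_zero T P \<longleftrightarrow> (\<forall>U. nhd0 T U \<longrightarrow> (\<exists>S. P S \<and> nhd0 T S \<and> S \<subseteq> U))"

definition locally_symmetric_solid ::
  "('a::real_vector \<Rightarrow> 'a \<Rightarrow> bool) \<Rightarrow> ('a \<Rightarrow> 'a \<Rightarrow> bool) \<Rightarrow> 'a topology \<Rightarrow> bool" where
  "locally_symmetric_solid le sle T \<longleftrightarrow>
     vector_topology T \<and> has_base_at_zero T (symmetric_solid le sle)"

definition locally_solid_riesz_topology ::
  "('a::real_vector \<Rightarrow> 'a \<Rightarrow> bool) \<Rightarrow> 'a topology \<Rightarrow> bool" where
  "locally_solid_riesz_topology le T \<longleftrightarrow>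
     vector_topology T \<and> has_base_at_zero T (solid le)"

end

theory Submission
  imports Defs
begin

lemma ovs_parts:
  assumes "ordered_vs le"
  shows "\<And>x. le x x" "\<And>x y. le x y \<Longrightarrow> le y x \<Longrightarrow> x = y"
    "\<And>x y z. le x y \<Longrightarrow> le y z \<Longrightarrow> le x z"
    "\<And>x y z. le x y \<Longrightarrow> le (x + z) (y + z)"
    "\<And>x y (c::real). le x y \<Longrightarrow> 0 \<le> c \<Longrightarrow> le (c *\<^sub>R x) (c *\<^sub>R y)"
proof -
  note c = assms[unfolded ordered_vs_def]
  show "\<And>x. le x x" using c[THEN conjunct1] by blast
  show "\<And>x y. le x y \<Longrightarrow> le y x \<Longrightarrow> x = y" using c[THEN conjunct2, THEN conjunct1] by blast
  show "\<And>x y z. le x y \<Longrightarrow> le y z \<Longrightarrow> le x z"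
    using c[THEN conjunct2, THEN conjunct2, THEN conjunct1] by blast
  show "\<And>x y z. le x y \<Longrightarrow> le (x + z) (y + z)"
    using c[THEN conjunct2, THEN conjunct2, THEN conjunct2, THEN conjunct1] by blast
  show "\<And>x y (c::real). le x y \<Longrightarrow> 0 \<le> c \<Longrightarrow> le (c *\<^sub>R x) (c *\<^sub>R y)"
    using c[THEN conjunct2, THEN conjunct2, THEN conjunct2, THEN conjunct2] by blast
qed

lemma ml_parts:
  assumes "mixed_lattice_vs le sle"
  shows "ordered_vs le" "ordered_vs sle"
    "\<And>x y. \<exists>m. is_least le {w. sle x w \<and> le y w} m"
    "\<And>x y. sle x y \<Longrightarrow> le x y"
proof -
  note c = assms[unfolded mixed_lattice_vs_def]
  show "ordered_vs le" using c[THEN conjunct1] .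
  show "ordered_vs sle" using c[THEN conjunct2, THEN conjunct1] .
  show "\<And>x y. \<exists>m. is_least le {w. sle x w \<and> le y w} m"
    using c[THEN conjunct2, THEN conjunct2, THEN conjunct1] by blast
  show "\<And>x y. sle x y \<Longrightarrow> le x y"
    using c[THEN conjunct2, THEN conjunct2, THEN conjunct2, THEN conjunct2, THEN conjunct1] by blast
qed

lemma lat_parts:
  assumes "lattice_ord le"
  shows "\<And>x y. \<exists>m. is_least le {w. le x w \<and> le y w} m"
  using assms[unfolded lattice_ord_def, THEN conjunct1] by blast

lemma least_unique:
  assumes "ordered_vs le" "is_least le S m"
  shows "(THE m. is_least le S m) = m"
proof (rule the_equality)
  fix n assume "is_least le S n"
  thus "n = m" using assms(2) ovs_parts(2)[OF assms(1)] unfolding is_least_def by blast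
qed (rule assms(2))

lemma mu_least:
  assumes "mixed_lattice_vs le sle"
  shows "is_least le {w. sle x w \<and> le y w} (mixed_upper le sle x y)"
proof -
  obtain m where m: "is_least le {w. sle x w \<and> le y w} m"
    using ml_parts(3)[OF assms] by blast
  have "ordered_vs le" using ml_parts(1)[OF assms] .
  with m show ?thesis unfolding mixed_upper_def by (simp add: least_unique)
qed

lemma lsup_least:
  assumes "ordered_vs le" "lattice_ord le"
  shows "is_least le {w. le x w \<and> le y w} (lsup le x y)"
proof -
  obtain m where m: "is_least le {w. le x w \<and> le y w} m"
    using lat_parts[OF assms(2)] by blast
  with assms show ?thesis unfolding lsup_def by (simp add: least_unique)
qed

lemma key:
  fixes le sle :: "'a::real_vector \<Rightarrow> 'a \<Rightarrow> bool"
  assumes ml: "mixed_lattice_vs le sle" and lat: "lattice_ord le"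
    and zx: "le (labs le z) (labs le x)"
  shows "le (sabs le sle z) (sabs le sle (x + x))"
proof -
  have ole: "ordered_vs le" and osle: "ordered_vs sle" and sl: "\<And>a b. sle a b \<Longrightarrow> le a b"
    using ml_parts[OF ml] by auto
  have refl: "\<And>a. le a a" and trans: "\<And>a b c. le a b \<Longrightarrow> le b c \<Longrightarrow> le a c"
    and tr: "\<And>a b c. le a b \<Longrightarrow> le (a + c) (b + c)"
    and sc: "\<And>a b c. le a b \<Longrightarrow> 0 \<le> c \<Longrightarrow> le (c *\<^sub>R a) (c *\<^sub>R b)"
    using ovs_parts[OF ole] by blast+
  have strans: "\<And>a b c. sle a b \<Longrightarrow> sle b c \<Longrightarrow> sle a c"
    and str: "\<And>a b c. sle a b \<Longrightarrow> sle (a + c) (b + c)"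
    and ssc: "\<And>a b c. sle a b \<Longrightarrow> 0 \<le> c \<Longrightarrow> sle (c *\<^sub>R a) (c *\<^sub>R b)"
    using ovs_parts[OF osle] by blast+
  have addm: "\<And>a b c d. le a b \<Longrightarrow> le c d \<Longrightarrow> le (a + c) (b + d)"
  proof -
    fix a b c d assume "le a b" "le c d"
    then have "le (a + c) (b + c)" "le (c + b) (d + b)" using tr by blast+
    thus "le (a + c) (b + d)" using trans by (simp add: add.commute)
  qed
  have saddm: "\<And>a b. sle 0 a \<Longrightarrow> sle 0 b \<Longrightarrow> sle 0 (a + b)"
  proof -
    fix a b assume "sle 0 a" "sle 0 b"
    then have "sle (0 + b) (a + b)" using str by blast
    with \<open>sle 0 b\<close> show "sle 0 (a + b)" using strans by simp
  qed
  have lz: "is_least le {w. le z w \<and> le (-z) w} (labs le z)"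
    and lx: "is_least le {w. le x w \<and> le (-x) w} (labs le x)"
    unfolding labs_def using lsup_least[OF ole lat] by blast+
  define m where "m = upart le sle (labs le x)"
  have mL: "is_least le {w. sle 0 w \<and> le (labs le x) w} m"
    unfolding m_def upart_def by (rule mu_least[OF ml])
  have zz: "le z (labs le z)" "le (-z) (labs le z)" using lz unfolding is_least_def by auto
  have xm: "le (labs le x) m" using mL unfolding is_least_def by auto
  have zxm: "le (labs le z) m" using trans[OF zx xm] .
  have zm: "le z m" "le (-z) m" using trans[OF zz(1) zxm] trans[OF zz(2) zxm] by auto
  have "le (upart le sle z) m"
    using mu_least[OF ml, of 0 z] mL zm unfolding upart_def is_least_def by blast
  moreover have "le (lpart le sle z) m"
    using mu_least[OF ml, of 0 "-z"] mL zm unfolding lpart_def is_least_def by blast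
  ultimately have s1: "le (sabs le sle z) (m + m)" unfolding sabs_def by (rule addm)
  define a where "a = upart le sle (x + x)"
  define b where "b = lpart le sle (x + x)"
  have a: "sle 0 a" "le (x + x) a"
    using mu_least[OF ml, of 0 "x+x"] unfolding a_def upart_def is_least_def by auto
  have b: "sle 0 b" "le (-(x + x)) b"
    using mu_least[OF ml, of 0 "-(x+x)"] unfolding b_def lpart_def is_least_def by auto
  define w where "w = (1/2::real) *\<^sub>R (a + b)"
  have ww: "w + w = a + b" unfolding w_def by (simp add: scaleR_add_right[symmetric])
  have "sle 0 w" unfolding w_def using ssc[OF saddm[OF a(1) b(1)], of "1/2"] by simp
  moreover have "le x w"
  proof -
    have "le ((x + x) + 0) (a + b)" using addm[OF a(2) sl[OF b(1)]] .
    hence "le ((1/2::real) *\<^sub>R (x + x)) w" unfolding w_def using sc[of "(x + x) + 0" "a + b" "1/2"] by simp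
    thus ?thesis by (simp add: scaleR_add_right[symmetric])
  qed
  moreover have "le (-x) w"
  proof -
    have "le (0 + -(x + x)) (a + b)" using addm[OF sl[OF a(1)] b(2)] .
    hence "le ((1/2::real) *\<^sub>R (-(x + x))) w" unfolding w_def using sc[of "0 + -(x + x)" "a + b" "1/2"] by simp
    moreover have "(1/2::real) *\<^sub>R (-(x + x)) = - x"
      by (metis add_diff_cancel_left' diff_add_cancel minus_add_distrib scaleR_half_double)
    ultimately show ?thesis by simp
  qed
  ultimately have "le (labs le x) w" using lx unfolding is_least_def by blast
  hence "sle 0 w \<and> le (labs le x) w" using \<open>sle 0 w\<close> by blast
  moreover have "\<forall>v. sle 0 v \<and> le (labs le x) v \<longrightarrow> le m v" using mL unfolding is_least_def by simp
  ultimately have "le m w" by blast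
  hence "le (m + m) (w + w)" using addm by blast
  hence "le (m + m) (a + b)" using ww by simp
  from trans[OF s1 this] show ?thesis unfolding sabs_def a_def b_def .
qed

theorem theorem4p9:
  fixes le sle :: "'a::real_vector \<Rightarrow> 'a \<Rightarrow> bool" and T :: "'a topology"
  assumes "mixed_lattice_vs le sle"
    and "lattice_ord le"
    and "locally_symmetric_solid le sle T"
  shows "locally_solid_riesz_topology le T"
proof -
  have vt: "vector_topology T" and hb: "has_base_at_zero T (symmetric_solid le sle)"
    using assms(3) unfolding locally_symmetric_solid_def by auto
  have ts: "topspace T = UNIV"
    and add: "continuous_map (prod_topology T T) T (\<lambda>(x, y). x + y)"
    using vt unfolding vector_topology_def by auto
  have ole: "ordered_vs le" using ml_parts(1)[OF assms(1)] .
  have trans: "\<And>a b c. le a b \<Longrightarrow> le b c \<Longrightarrow> le a c" and refl: "\<And>a. le a a"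
    using ovs_parts[OF ole] by blast+
  have dbl: "continuous_map T T (\<lambda>x. x + x)"
  proof -
    have "continuous_map T (prod_topology T T) (\<lambda>x. (x, x))"
      by (intro continuous_map_pairedI continuous_map_id[unfolded id_def])
    from continuous_map_compose[OF this add] show ?thesis by (simp add: o_def)
  qed
  have "has_base_at_zero T (solid le)"
    unfolding has_base_at_zero_def
  proof (intro allI impI)
    fix U assume "nhd0 T U"
    then obtain S where S: "symmetric_solid le sle S" "nhd0 T S" "S \<subseteq> U"
      using hb unfolding has_base_at_zero_def by blast
    then obtain O1 where O1: "openin T O1" "0 \<in> O1" "O1 \<subseteq> S" unfolding nhd0_def by blast
    define W where "W = {x. \<forall>z. le (labs le z) (labs le x) \<longrightarrow> z \<in> S}"
    have "solid le W" unfolding solid_def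
    proof (intro allI impI)
      fix x y assume h: "y \<in> W \<and> le (labs le x) (labs le y)"
      show "x \<in> W" unfolding W_def mem_Collect_eq
      proof (intro allI impI)
        fix z assume "le (labs le z) (labs le x)"
        hence "le (labs le z) (labs le y)" using trans h by blast
        thus "z \<in> S" using h unfolding W_def by blast
      qed
    qed
    moreover have "W \<subseteq> S"
    proof
      fix x assume "x \<in> W"
      hence "le (labs le x) (labs le x) \<longrightarrow> x \<in> S" unfolding W_def by blast
      thus "x \<in> S" using refl by blast
    qed
    hence "W \<subseteq> U" using S(3) by blast
    moreover have "nhd0 T W"
    proof -
      have op: "openin T {x \<in> topspace T. x + x \<in> O1}"
        by (rule openin_continuous_map_preimage[OF dbl O1(1)])
      have "{x \<in> topspace T. x + x \<in> O1} \<subseteq> W"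
      proof
        fix x assume "x \<in> {x \<in> topspace T. x + x \<in> O1}"
        hence xs: "x + x \<in> S" using O1(3) by blast
        show "x \<in> W" unfolding W_def mem_Collect_eq
        proof (intro allI impI)
          fix z assume "le (labs le z) (labs le x)"
          from key[OF assms(1,2) this] xs S(1) show "z \<in> S"
            unfolding symmetric_solid_def by blast
        qed
      qed
      moreover have "0 \<in> {x \<in> topspace T. x + x \<in> O1}" using O1(2) ts by simp
      ultimately show ?thesis unfolding nhd0_def using op by blast
    qed
    ultimately show "\<exists>S. solid le S \<and> nhd0 T S \<and> S \<subseteq> U" by blast
  qed
  with vt show ?thesis unfolding locally_solid_riesz_topology_def by blast
qed

end
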